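(* There is an absolute constant $c>0$ such that for all integers $n\ge 2$, $1\le k<n$, $d\ge 2k$ and $t\ge1$ with $(d+1)\mid t$, every binary $t\times n$ matrix $M$ that is $d$-runlength constrained and is a (zero-error) QNAGT scheme for $k$ defectives satisfies $$t\ge c\,\frac{d\log(n/k)}{\log(d^2/k)}.$$
   Context: $\log$ denotes the base-2 logarithm. A binary $t\times n$ matrix $M$ is $d$-runlength constrained if in every column, any two $1$'s are separated by a run of at least $d$ zeros, i.e. $M_{ij}=M_{i'j}=1$ with $i<i'$ implies $i'-i\ge d+1$. A vector is $k$-sparse if its Hamming weight is at most $k$. $M$ is a zero-error QNAGT scheme for $k$ defectives if $Mx\ne Mx'$ (real matrix-vector product) for all distinct $k$-sparse $x,x'\in\{0,1\}^n$. *)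

theory Defs
  imports "HOL-Analysis.Analysis"
begin

text \<open>A binary t x n matrix is M :: nat \<Rightarrow> nat \<Rightarrow> bool, entry (i,j) for i < t, j < n
  (True = 1, False = 0). A binary vector x \<in> {0,1}^n is a function nat \<Rightarrow> bool,
  only the coordinates j < n matter.\<close>

definition runlength_constrained :: "nat \<Rightarrow> nat \<Rightarrow> nat \<Rightarrow> (nat \<Rightarrow> nat \<Rightarrow> bool) \<Rightarrow> bool" where
  "runlength_constrained t n d M \<longleftrightarrow>
     (\<forall>j<n. \<forall>i<t. \<forall>i'<t. M i j \<and> M i' j \<and> i < i' \<longrightarrow> i' - i \<ge> d + 1)"

definition hamming_weight :: "nat \<Rightarrow> (nat \<Rightarrow> bool) \<Rightarrow> nat" where
  "hamming_weight n x = card {j. j < n \<and> x j}"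

definition sparse :: "nat \<Rightarrow> nat \<Rightarrow> (nat \<Rightarrow> bool) \<Rightarrow> bool" where
  "sparse n k x \<longleftrightarrow> hamming_weight n x \<le> k"

definition mat_vec :: "nat \<Rightarrow> (nat \<Rightarrow> nat \<Rightarrow> bool) \<Rightarrow> (nat \<Rightarrow> bool) \<Rightarrow> nat \<Rightarrow> real" where
  "mat_vec n M x i = (\<Sum>j<n. (if M i j then 1 else 0) * (if x j then 1 else 0))"

definition QNAGT :: "nat \<Rightarrow> nat \<Rightarrow> nat \<Rightarrow> (nat \<Rightarrow> nat \<Rightarrow> bool) \<Rightarrow> bool" where
  "QNAGT t n k M \<longleftrightarrow>
     (\<forall>x x'. sparse n k x \<and> sparse n k x' \<and> (\<exists>j<n. x j \<noteq> x' j)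
        \<longrightarrow> (\<exists>i<t. mat_vec n M x i \<noteq> mat_vec n M x' i))"

end

theory Submission
  imports Defs "HOL-Library.FuncSet"
begin

lemma uniq_row:
  assumes rl: "runlength_constrained t n d M" and tm: "t = m*(d+1)" and b: "b<m"
    and r1: "r1\<le>d" and r2: "r2\<le>d" and c: "c<n"
    and M1: "M (b*(d+1)+r1) c" and M2: "M (b*(d+1)+r2) c"
  shows "r1 = r2"
proof -
  have "(b+1)*(d+1) \<le> m*(d+1)" using b by (intro mult_right_mono) auto
  hence lt: "b*(d+1)+d < t" using tm by (simp add: algebra_simps)
  have R: "\<And>i i'. i<t \<Longrightarrow> i'<t \<Longrightarrow> M i c \<Longrightarrow> M i' c \<Longrightarrow> i < i' \<Longrightarrow> d+1 \<le> i' - i"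
    using rl c unfolding runlength_constrained_def by blast
  show ?thesis
  proof (rule ccontr)
    assume "r1 \<noteq> r2"
    hence "r1 < r2 \<or> r2 < r1" by auto
    thus False
    proof
      assume "r1 < r2"
      hence "(b*(d+1)+r2) - (b*(d+1)+r1) \<ge> d+1"
        using R[of "b*(d+1)+r1" "b*(d+1)+r2"] M1 M2 lt r1 r2 by auto
      thus False using r1 r2 by auto
    next
      assume "r2 < r1"
      hence "(b*(d+1)+r1) - (b*(d+1)+r2) \<ge> d+1"
        using R[of "b*(d+1)+r2" "b*(d+1)+r1"] M1 M2 lt r1 r2 by auto
      thus False using r1 r2 by auto
    qed
  qed
qed

lemma count_bound:
  assumes rl: "runlength_constrained t n d M" and q: "QNAGT t n k M"
    and tm: "t = m*(d+1)" and kn: "k \<le> n"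
  shows "n choose k \<le> (d+2)^(m*k)"
proof -
  define D where "D = {S. S \<subseteq> {..<n} \<and> card S = k}"
  define V where "V = (\<lambda>S i. if i < t then mat_vec n M (\<lambda>j. j\<in>S) i else 0)"
  define \<Phi> where "\<Phi> = (\<lambda>(F::nat\<times>nat\<Rightarrow>nat) i. if i < t then
       real (card {j. j<k \<and> F (i div (d+1), j) = i mod (d+1)}) else 0)"
  define Fs where "Fs = PiE ({..<m}\<times>{..<k}) (\<lambda>_. {..d+1})"
  define Fof where "Fof = (\<lambda>S. \<lambda>p\<in>{..<m}\<times>{..<k}.
      let c = sorted_list_of_set S ! snd p in
      (if \<exists>r\<le>d. M (fst p*(d+1)+r) c then (THE r. r\<le>d \<and> M (fst p*(d+1)+r) c) else d+1))"
  have cardD: "card D = n choose k" unfolding D_def using n_subsets[of "{..<n}" k] by simp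
  have finD: "finite D" unfolding D_def by simp
  have inj: "inj_on V D"
  proof (rule inj_onI)
    fix S S' assume S: "S \<in> D" and S': "S' \<in> D" and eq: "V S = V S'"
    show "S = S'"
    proof (rule ccontr)
      assume ne: "S \<noteq> S'"
      have sub: "S \<subseteq> {..<n}" "S' \<subseteq> {..<n}" using S S' by (auto simp: D_def)
      then obtain j where "j<n" "(j\<in>S) \<noteq> (j\<in>S')" using ne by blast
      moreover have "sparse n k (\<lambda>j. j\<in>S)" "sparse n k (\<lambda>j. j\<in>S')"
      proof -
        have "{j. j<n \<and> j\<in>S} = S" "{j. j<n \<and> j\<in>S'} = S'" using sub by auto
        thus "sparse n k (\<lambda>j. j\<in>S)" "sparse n k (\<lambda>j. j\<in>S')"
          using S S' by (auto simp: sparse_def hamming_weight_def D_def)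
      qed
      ultimately obtain i where "i<t" "mat_vec n M (\<lambda>j. j\<in>S) i \<noteq> mat_vec n M (\<lambda>j. j\<in>S') i"
        using q unfolding QNAGT_def by blast
      hence "V S i \<noteq> V S' i" by (simp add: V_def)
      thus False using eq by simp
    qed
  qed
  have main: "V S = \<Phi> (Fof S) \<and> Fof S \<in> Fs" if S: "S \<in> D" for S
  proof
    define s where "s = sorted_list_of_set S"
    have finS: "finite S" and subS: "S \<subseteq> {..<n}" and cS: "card S = k"
      using S by (auto simp: D_def intro: finite_subset)
    have ls: "length s = k" "distinct s" "set s = S" using finS cS by (auto simp: s_def)
    have bij: "bij_betw ((!) s) {..<k} S" using ls by (intro bij_betw_nth) auto
    have sn: "s ! q < n" if "q<k" for q using bij subS that by (auto dest: bij_betwE)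
    have Fval: "Fof S (b,q) = (if \<exists>r\<le>d. M (b*(d+1)+r) (s!q) then (THE r. r\<le>d \<and> M (b*(d+1)+r) (s!q)) else d+1)"
      if "b<m" "q<k" for b q using that by (auto simp: Fof_def s_def Let_def)
    show "Fof S \<in> Fs"
    proof -
      have "Fof S p \<in> {..d+1}" if p: "p \<in> {..<m}\<times>{..<k}" for p
      proof -
        obtain b q where pq: "p = (b,q)" "b<m" "q<k" using p by auto
        show ?thesis
        proof (cases "\<exists>r\<le>d. M (b*(d+1)+r) (s!q)")
          case True
          then obtain r where r: "r\<le>d" "M (b*(d+1)+r) (s!q)" by blast
          have "(THE r. r\<le>d \<and> M (b*(d+1)+r) (s!q)) = r"
            using r uniq_row[OF rl tm pq(2) _ _ sn[OF pq(3)]] by (intro the_equality) auto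
          thus ?thesis using True Fval[OF pq(2,3)] pq r by auto
        next
          case False
          thus ?thesis using Fval[OF pq(2,3)] pq by auto
        qed
      qed
      thus ?thesis unfolding Fs_def by (auto simp: Fof_def)
    qed
    show "V S = \<Phi> (Fof S)"
    proof
      fix i
      show "V S i = \<Phi> (Fof S) i"
      proof (cases "i<t")
        case False thus ?thesis by (simp add: V_def \<Phi>_def)
      next
        case True
        define b where "b = i div (d+1)"
        define r where "r = i mod (d+1)"
        have ib: "i = b*(d+1)+r" unfolding b_def r_def by (metis div_mult_mod_eq)
        have bm: "b < m" using True tm by (simp add: b_def less_mult_imp_div_less)
        have rd: "r \<le> d" by (simp add: r_def)
        have "mat_vec n M (\<lambda>j. j\<in>S) i = (\<Sum>j\<in>S. (if M i j then 1 else 0))"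
        proof -
          have "mat_vec n M (\<lambda>j. j\<in>S) i = (\<Sum>j\<in>{..<n}. if j\<in>S then (if M i j then 1 else 0) else 0)"
            unfolding mat_vec_def by (intro sum.cong) auto
          also have "\<dots> = (\<Sum>j\<in>{..<n}\<inter>S. (if M i j then 1 else 0))"
            by (simp add: sum.inter_restrict)
          also have "{..<n}\<inter>S = S" using subS by auto
          finally show ?thesis .
        qed
        also have "\<dots> = real (card {j\<in>S. M i j})"
          using finS by (simp add: sum.If_cases Int_def)
        also have "card {j\<in>S. M i j} = card {q\<in>{..<k}. M i (s!q)}"
        proof -
          have "bij_betw ((!) s) {q\<in>{..<k}. M i (s!q)} {j\<in>S. M i j}"
            using bij unfolding bij_betw_def inj_on_def by auto
          thus ?thesis by (simp add: bij_betw_same_card)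
        qed
        also have "{q\<in>{..<k}. M i (s!q)} = {q. q<k \<and> Fof S (b, q) = r}"
        proof (intro set_eqI iffI)
          fix q assume "q \<in> {q\<in>{..<k}. M i (s!q)}"
          hence q: "q<k" "M (b*(d+1)+r) (s!q)" using ib by auto
          have "(THE r'. r'\<le>d \<and> M (b*(d+1)+r') (s!q)) = r"
            using q rd uniq_row[OF rl tm bm _ _ sn[OF q(1)]] by (intro the_equality) auto
          thus "q \<in> {q. q<k \<and> Fof S (b, q) = r}" using Fval[OF bm q(1)] q rd by auto
        next
          fix q assume "q \<in> {q. q<k \<and> Fof S (b, q) = r}"
          hence q: "q<k" "Fof S (b,q) = r" by auto
          have ex: "\<exists>r\<le>d. M (b*(d+1)+r) (s!q)"
          proof (rule ccontr)
            assume nex: "\<not> ?thesis"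
            have "Fof S (b,q) = d+1" using Fval[OF bm q(1)] if_not_P[OF nex] by metis
            thus False using q rd by simp
          qed
          then obtain r0 where r0: "r0\<le>d" "M (b*(d+1)+r0) (s!q)" by blast
          have "(THE r'. r'\<le>d \<and> M (b*(d+1)+r') (s!q)) = r0"
            using r0 uniq_row[OF rl tm bm _ _ sn[OF q(1)]] by (intro the_equality) auto
          hence "r0 = r" using Fval[OF bm q(1)] q ex by auto
          thus "q \<in> {q\<in>{..<k}. M i (s!q)}" using r0 q ib by auto
        qed
        finally show ?thesis using True by (simp add: V_def \<Phi>_def b_def r_def)
      qed
    qed
  qed
  have "card D = card (V ` D)" using inj by (simp add: card_image)
  also have "V ` D \<subseteq> \<Phi> ` Fs" using main by force
  hence "card (V ` D) \<le> card (\<Phi> ` Fs)"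
    by (intro card_mono) (auto simp: Fs_def intro!: finite_PiE)
  also have "\<dots> \<le> card Fs" by (rule card_image_le) (auto simp: Fs_def intro!: finite_PiE)
  also have "card Fs = (d+2)^(m*k)" by (simp add: Fs_def card_PiE card_cartesian_product)
  finally show ?thesis using cardD by simp
qed

theorem theorem6:
  shows "\<exists>c::real. c > 0 \<and>
    (\<forall>n k d t :: nat. \<forall>M :: nat \<Rightarrow> nat \<Rightarrow> bool.
       n \<ge> 2 \<and> 1 \<le> k \<and> k < n \<and> d \<ge> 2 * k \<and> t \<ge> 1 \<and> (d + 1) dvd t \<and>
       runlength_constrained t n d M \<and> QNAGT t n k M
       \<longrightarrow> real t \<ge> c * (real d * log 2 (real n / real k)) / log 2 (real d ^ 2 / real k))"
proof (intro exI[of _ 1] conjI allI impI)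
  fix n k d t :: nat and M :: "nat \<Rightarrow> nat \<Rightarrow> bool"
  assume h: "n \<ge> 2 \<and> 1 \<le> k \<and> k < n \<and> d \<ge> 2 * k \<and> t \<ge> 1 \<and> (d + 1) dvd t \<and>
       runlength_constrained t n d M \<and> QNAGT t n k M"
  define m where "m = t div (d+1)"
  have tm: "t = m*(d+1)" using h by (metis dvd_div_mult_self m_def)
  have kpos: "real k > 0" using h by auto
  have d2: "d \<ge> 2" using h by auto
  have cnt: "n choose k \<le> (d+2)^(m*k)" using count_bound[OF _ _ tm] h by auto
  have "(real n / real k)^k \<le> real (n choose k)"
    using h by (intro binomial_ge_n_over_k_pow_k) auto
  also have "\<dots> \<le> real (d+2)^(m*k)" using cnt by (metis of_nat_le_iff of_nat_power)
  finally have ineq: "(real n / real k)^k \<le> real (d+2)^(m*k)" .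
  have npos: "real n / real k > 0" using h by auto
  have "log 2 ((real n / real k)^k) \<le> log 2 (real (d+2)^(m*k))"
    using ineq npos by (intro log_mono) auto
  hence "real k * log 2 (real n / real k) \<le> real (m*k) * log 2 (real (d+2))"
    using npos by (simp add: log_nat_power)
  hence A: "log 2 (real n / real k) \<le> real m * log 2 (real (d+2))"
    using kpos by (simp add: algebra_simps)
  have dk: "real k * (real d + 2) \<le> real d ^ 2"
  proof -
    have "2 * real k \<le> real d" using h by linarith
    hence "real k * (real d + 2) \<le> (real d / 2) * (real d + 2)" by (intro mult_right_mono) auto
    also have "\<dots> \<le> real d ^ 2" using d2 by (simp add: power2_eq_square algebra_simps)
    finally show ?thesis .
  qed
  hence dk2: "real (d+2) \<le> real d ^ 2 / real k" using kpos by (simp add: field_simps)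
  have Lpos: "log 2 (real d ^ 2 / real k) > 0"
    proof -
    have "1 < real d ^ 2 / real k" using dk2 d2 by linarith
    moreover have "0 < real d ^ 2 / real k" using kpos d2 by simp
    ultimately show ?thesis by (subst zero_less_log_cancel_iff) auto
  qed
  have B: "log 2 (real (d+2)) \<le> log 2 (real d ^ 2 / real k)"
    using dk2 by (intro log_mono) auto
  have lnk: "log 2 (real n / real k) \<ge> 0" using h kpos by (subst zero_le_log_cancel_iff) (auto simp: field_simps)
  have "real d * log 2 (real n / real k) \<le> real d * (real m * log 2 (real (d+2)))"
    using A by (intro mult_left_mono) auto
  also have "\<dots> \<le> real d * (real m * log 2 (real d ^ 2 / real k))"
    using B by (intro mult_left_mono) auto
  also have "\<dots> \<le> (real d + 1) * (real m * log 2 (real d ^ 2 / real k))"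
    using Lpos by (intro mult_right_mono) auto
  also have "\<dots> = real t * log 2 (real d ^ 2 / real k)" using tm by (simp add: algebra_simps)
  finally show "1 * (real d * log 2 (real n / real k)) / log 2 (real d ^ 2 / real k) \<le> real t"
    using Lpos by (simp add: divide_le_eq)
qed simp

end
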